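(* Suppose $k_2=1$ and $Q$ is a symmetric positive definite $k\times k$ matrix with $Q_{12}=0$. For every $t\in\mathbb{R}^k$, the function $\gamma\mapsto F_{\infty,\gamma}(t)$, $\gamma\in\mathbb{R}$, is not constant, where $F_{\infty,\gamma}$ is the cdf of $B_\infty\gamma+C_\infty Z_1+[1+\exp(2\alpha)\exp(-\alpha(Z_2+Q_{22}^{1/2}\gamma)^2/\sigma^2)]^{-1}\{D_\infty Z_2-B_\infty\gamma\}$ with $B_\infty=(0_{1\times k_1},-1)'$, $C_\infty=\begin{bmatrix}Q_{11}^{-1/2}\\0_{1\times k_1}\end{bmatrix}$, $D_\infty=(0_{1\times k_1},Q_{22}^{-1/2})'$, and $Z_1\sim N(0,\sigma^2I_{k_1})$, $Z_2\sim N(0,\sigma^2)$ independent. More precisely, $F_{\infty,\gamma}(t)$ differs for some $\gamma\in\mathbb{R}$ from its limit $\lim_{|\gamma|\to\infty}F_{\infty,\gamma}(t)=\mathbb{P}(Q_{11}^{-1/2}Z_1\le t_1)\mathbb{P}(Q_{22}^{-1/2}Z_2\le t_2)$, where $t=(t_1',t_2)'$.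
   Context: $k=k_1+1$, $k_1\ge1$, $\sigma>0$, $\alpha>0$; $Q$ partitioned into $Q_{11}$ ($k_1\times k_1$), $Q_{12}=0$, $Q_{21}=0$, $Q_{22}>0$ scalar. $A^{1/2}$ is the symmetric positive definite root. Vector inequalities are componentwise. *)

theory Defs
  imports "HOL-Probability.Probability"
begin

definition pos_def_mat :: "real^'n^'n \<Rightarrow> bool" where
  "pos_def_mat A \<longleftrightarrow> transpose A = A \<and> (\<forall>x. x \<noteq> 0 \<longrightarrow> x \<bullet> (A *v x) > 0)"

definition mat_sqrt :: "real^'n^'n \<Rightarrow> real^'n^'n" where
  "mat_sqrt A = (THE S. pos_def_mat S \<and> S ** S = A)"

definition mat_inv_sqrt :: "real^'n^'n \<Rightarrow> real^'n^'n" where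
  "mat_inv_sqrt A = matrix_inv (mat_sqrt A)"

definition wgt :: "real \<Rightarrow> real \<Rightarrow> real \<Rightarrow> real \<Rightarrow> real \<Rightarrow> real" where
  "wgt \<alpha> \<sigma> Q22 \<gamma> z =
     inverse (1 + exp (2 * \<alpha>) * exp (- \<alpha> * (z + sqrt Q22 * \<gamma>)\<^sup>2 / \<sigma>\<^sup>2))"

text \<open>The cdf F_{infinity,gamma} at t = (t1', t2)', for the random vector
  B gamma + C Z1 + w (D Z2 - B gamma), whose first k1 components are
  Q11^(-1/2) Z1 and whose last component is -gamma + w (Q22^(-1/2) Z2 + gamma).\<close>
definition F_inf ::
  "'a measure \<Rightarrow> ('a \<Rightarrow> real^'n) \<Rightarrow> ('a \<Rightarrow> real) \<Rightarrow> real^'n^'n \<Rightarrow> real \<Rightarrow> real \<Rightarrow> real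
     \<Rightarrow> real \<Rightarrow> real^'n \<Rightarrow> real \<Rightarrow> real" where
  "F_inf M Z1 Z2 Q11 Q22 \<sigma> \<alpha> \<gamma> t1 t2 =
     measure M {\<omega> \<in> space M.
        (\<forall>i. (mat_inv_sqrt Q11 *v Z1 \<omega>) $ i \<le> t1 $ i) \<and>
        - \<gamma> + wgt \<alpha> \<sigma> Q22 \<gamma> (Z2 \<omega>) * (Z2 \<omega> / sqrt Q22 + \<gamma>) \<le> t2}"

end

theory Submission
  imports Defs
begin


lemma max_eigen:
  fixes f :: "'a::euclidean_space \<Rightarrow> 'a"
  assumes lin: "linear f" and sym: "\<And>x y. inner x (f y) = inner (f x) y"
    and V: "subspace V" and inv: "f ` V \<subseteq> V" and ne: "V \<noteq> {0}"
  shows "\<exists>v\<in>V. norm v = 1 \<and> f v = inner v (f v) *\<^sub>R v"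
proof -
  define K where "K = sphere (0::'a) 1 \<inter> V"
  have cK: "compact K" unfolding K_def
    by (intro compact_Int_closed compact_sphere closed_subspace V)
  have "0 \<in> V" using V by (simp add: subspace_0)
  with ne obtain x where x: "x \<in> V" "x \<noteq> 0" by blast
  then have "x /\<^sub>R norm x \<in> K" unfolding K_def using V
    by (simp add: subspace_scale)
  then have neK: "K \<noteq> {}" by blast
  have bl: "bounded_linear f" using lin by (simp add: linear_conv_bounded_linear)
  have cont: "continuous_on K (\<lambda>x. inner x (f x))"
    by (intro continuous_intros linear_continuous_on bl)
  obtain v where vK: "v \<in> K" and vmax: "\<And>y. y \<in> K \<Longrightarrow> inner y (f y) \<le> inner v (f v)"
    using continuous_attains_sup[OF cK neK cont] by blast
  define l where "l = inner v (f v)"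
  have vV: "v \<in> V" and nv: "norm v = 1" using vK by (auto simp: K_def)
  have vv: "inner v v = 1" using nv by (simp add: dot_square_norm)
  have key: "inner w (f v) = 0" if wV: "w \<in> V" and wv: "inner w v = 0" for w
  proof (rule ccontr)
    assume a0: "inner w (f v) \<noteq> 0"
    define a where "a = inner w (f v)"
    define c where "c = l * inner w w - inner w (f w)"
    have ineq: "2 * t * a \<le> t\<^sup>2 * c" for t
    proof -
      define y where "y = v + t *\<^sub>R w"
      have yV: "y \<in> V" unfolding y_def using V vV wV by (simp add: subspace_add subspace_scale)
      have yy: "inner y y = 1 + t\<^sup>2 * inner w w"
        unfolding y_def using vv wv
        by (simp add: inner_add_left inner_add_right inner_commute power2_eq_square algebra_simps)
      have ypos: "inner y y > 0" using yy by (smt (verit) inner_ge_zero mult_nonneg_nonneg zero_le_power2)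
      have yne: "norm y > 0" using ypos by (metis inner_gt_zero_iff zero_less_norm_iff)
      have "y /\<^sub>R norm y \<in> K" unfolding K_def using yV V yne by (simp add: subspace_scale)
      then have "inner (y /\<^sub>R norm y) (f (y /\<^sub>R norm y)) \<le> l" using vmax l_def by blast
      moreover have "inner (y /\<^sub>R norm y) (f (y /\<^sub>R norm y)) = inner y (f y) / (norm y)\<^sup>2"
        using lin by (simp add: linear_scale power2_eq_square field_simps)
      ultimately have "inner y (f y) \<le> l * (norm y)\<^sup>2" using yne
        by (simp add: divide_le_eq)
      also have "(norm y)\<^sup>2 = inner y y" by (simp add: dot_square_norm)
      finally have "inner y (f y) \<le> l * (1 + t\<^sup>2 * inner w w)" using yy by simp
      moreover have "inner y (f y) = l + 2 * t * a + t\<^sup>2 * inner w (f w)"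
        unfolding y_def a_def l_def using lin sym[of v w]
        by (simp add: linear_add linear_scale inner_add_left inner_add_right inner_commute power2_eq_square algebra_simps)
      ultimately show ?thesis unfolding c_def by (simp add: algebra_simps)
    qed
    define d where "d = \<bar>c\<bar> + 1"
    have dpos: "d > 0" unfolding d_def by simp
    define t where "t = a / d"
    have td: "t * d = a" unfolding t_def using dpos by simp
    have "(2 * t * a) * d\<^sup>2 \<le> (t\<^sup>2 * c) * d\<^sup>2" by (rule mult_right_mono[OF ineq]) simp
    then have "2 * (t * d) * a * d \<le> (t * d)\<^sup>2 * c" by (simp add: power2_eq_square algebra_simps)
    then have "2 * a * a * d \<le> a\<^sup>2 * c" unfolding td .
    then have "2 * (a * a) * (\<bar>c\<bar> + 1) \<le> (a * a) * c" unfolding d_def by (simp add: power2_eq_square algebra_simps)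
    moreover have "a * a > 0" using a0 unfolding a_def[symmetric] by (auto simp add: zero_less_mult_iff linorder_neq_iff)
    ultimately have "2 * (\<bar>c\<bar> + 1) \<le> c"
      by (metis mult.assoc mult.commute mult_le_cancel_left_pos)
    then show False by (smt (verit) abs_ge_self)
  qed
  define w where "w = f v - l *\<^sub>R v"
  have wV: "w \<in> V" unfolding w_def using V inv vV by (simp add: subspace_diff subspace_scale image_subset_iff)
  have wv: "inner w v = 0" unfolding w_def l_def using vv by (simp add: inner_diff_left inner_diff_right inner_commute)
  have "inner w (f v) = 0" using key[OF wV wv] .
  moreover have "inner w w = inner w (f v) - l * inner w v"
    by (metis inner_diff_right inner_scaleR_right w_def)
  ultimately have "inner w w = 0" using wv by simp
  then have "w = 0" by simp
  then show ?thesis using vV nv unfolding w_def l_def by (intro bexI[of _ v]) auto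
qed

lemma spectral_sub:
  fixes f :: "'a::euclidean_space \<Rightarrow> 'a"
  assumes lin: "linear f" and sym: "\<And>x y. inner x (f y) = inner (f x) y"
  shows "subspace V \<Longrightarrow> f ` V \<subseteq> V \<Longrightarrow> \<exists>B. B \<subseteq> V \<and> finite B \<and> pairwise orthogonal B \<and>
     (\<forall>b\<in>B. norm b = 1 \<and> f b = inner b (f b) *\<^sub>R b) \<and> span B = V"
proof (induction "dim V" arbitrary: V rule: less_induct)
  case less
  show ?case
  proof (cases "V = {0}")
    case True
    then show ?thesis by (intro exI[of _ "{}"]) auto
  next
    case False
    obtain v where vV: "v \<in> V" and nv: "norm v = 1" and ev: "f v = inner v (f v) *\<^sub>R v"
      using max_eigen[OF lin sym less.prems False] by blast
    have vv: "inner v v = 1" using nv by (simp add: dot_square_norm)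
    define V' where "V' = V \<inter> {x. inner x v = 0}"
    have sV': "subspace V'" unfolding V'_def using less.prems(1)
      by (auto simp: subspace_def inner_add_left)
    have iV': "f ` V' \<subseteq> V'"
    proof
      fix y assume "y \<in> f ` V'"
      then obtain x where x: "x \<in> V'" "y = f x" by blast
      have "inner (f x) v = inner x (f v)" using sym by simp
      also have "\<dots> = 0" using x(1) unfolding V'_def by (subst ev) simp
      finally show "y \<in> V'" using x less.prems(2) unfolding V'_def by auto
    qed
    have "V' \<subset> V" using vV vv unfolding V'_def by force
    then have "dim V' < dim V"
      using dim_psubset span_eq_iff less.prems(1) sV' by metis
    from less.hyps[OF this sV' iV'] obtain B' where B': "B' \<subseteq> V'" "finite B'" "pairwise orthogonal B'"
      "\<forall>b\<in>B'. norm b = 1 \<and> f b = inner b (f b) *\<^sub>R b" "span B' = V'" by blast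
    show ?thesis
    proof (intro exI[of _ "insert v B'"] conjI)
      show "insert v B' \<subseteq> V" using B'(1) vV unfolding V'_def by auto
      show "finite (insert v B')" using B'(2) by simp
      show "pairwise orthogonal (insert v B')"
        using B'(1,3) unfolding pairwise_insert V'_def orthogonal_def by (auto simp: inner_commute)
      show "\<forall>b\<in>insert v B'. norm b = 1 \<and> f b = inner b (f b) *\<^sub>R b" using B'(4) nv ev by auto
      show "span (insert v B') = V"
      proof
        show "span (insert v B') \<subseteq> V" using \<open>insert v B' \<subseteq> V\<close> less.prems(1)
          by (simp add: span_minimal)
        show "V \<subseteq> span (insert v B')"
        proof
          fix x assume xV: "x \<in> V"
          have "x - inner x v *\<^sub>R v \<in> V'" unfolding V'_def using xV vV less.prems(1) vv
            by (simp add: subspace_diff subspace_scale inner_diff_left)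
          then have "x - inner x v *\<^sub>R v \<in> span (insert v B')"
            using B'(5) span_mono[of B' "insert v B'"] by auto
          moreover have "inner x v *\<^sub>R v \<in> span (insert v B')"
            by (simp add: span_base span_scale)
          ultimately have "(x - inner x v *\<^sub>R v) + inner x v *\<^sub>R v \<in> span (insert v B')"
            by (rule span_add)
          then show "x \<in> span (insert v B')" by simp
        qed
      qed
    qed
  qed
qed

lemma orth_expand:
  fixes B :: "'a::euclidean_space set"
  assumes fin: "finite B" and po: "pairwise orthogonal B" and nb: "\<forall>b\<in>B. norm b = 1"
    and sp: "span B = UNIV"
  shows "x = (\<Sum>b\<in>B. inner x b *\<^sub>R b)"
proof -
  have coef: "inner (\<Sum>b\<in>B. c b *\<^sub>R b) b' = c b'" if "b' \<in> B" for c b'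
  proof -
    have "inner (\<Sum>b\<in>B. c b *\<^sub>R b) b' = (\<Sum>b\<in>B. c b * inner b b')"
      by (simp add: inner_sum_left)
    also have "\<dots> = c b' * inner b' b'"
      using that po fin by (subst sum.remove[of B b']) (auto simp: pairwise_def orthogonal_def intro!: sum.neutral)
    also have "\<dots> = c b'" using nb that by (simp add: dot_square_norm)
    finally show ?thesis .
  qed
  define y where "y = x - (\<Sum>b\<in>B. inner x b *\<^sub>R b)"
  have "orthogonal y b" if "b \<in> B" for b
    unfolding y_def orthogonal_def using coef[OF that, of "\<lambda>b. inner x b"] by (simp add: inner_diff_left)
  then have "orthogonal y y" using orthogonal_to_span[of y B y] sp by auto
  then have "y = 0" by (simp add: orthogonal_def)
  then show ?thesis unfolding y_def by simp
qed

lemma orth_coef: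
  fixes B :: "'a::euclidean_space set"
  assumes fin: "finite B" and po: "pairwise orthogonal B" and nb: "\<forall>b\<in>B. norm b = 1"
    and bB: "b' \<in> B"
  shows "inner (\<Sum>b\<in>B. c b *\<^sub>R b) b' = c b'"
proof -
  have "inner (\<Sum>b\<in>B. c b *\<^sub>R b) b' = (\<Sum>b\<in>B. c b * inner b b')"
    by (simp add: inner_sum_left)
  also have "\<dots> = c b' * inner b' b'"
    using bB po fin by (subst sum.remove[of B b']) (auto simp: pairwise_def orthogonal_def intro!: sum.neutral)
  also have "\<dots> = c b'" using nb bB by (simp add: dot_square_norm)
  finally show ?thesis .
qed

lemma sym_inner:
  fixes A :: "real^'n^'n"
  assumes "transpose A = A"
  shows "inner x (A *v y) = inner (A *v x) y"
proof -
  have "inner x (A *v y) = inner (x v* A) y" by (simp add: dot_lmul_matrix)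
  also have "x v* A = transpose A *v x" by simp
  finally show ?thesis using assms by simp
qed

lemma sym_from_inner:
  fixes A :: "real^'n^'n"
  assumes "\<And>x y. inner x (A *v y) = inner (A *v x) y"
  shows "transpose A = A"
  unfolding matrix_eq
proof
  fix x
  have "inner (transpose A *v x - A *v x) y = 0" for y
    using assms[of x y] by (simp add: inner_diff_left dot_lmul_matrix[symmetric])
  from this[of "transpose A *v x - A *v x"] show "transpose A *v x = A *v x" by simp
qed

lemma pd_nonneg: "pos_def_mat A \<Longrightarrow> inner x (A *v x) \<ge> 0"
  unfolding pos_def_mat_def by (cases "x = 0") (auto intro: less_imp_le)

lemma pd_sqrt_ex1:
  fixes Q :: "real^'n^'n"
  assumes Q: "pos_def_mat Q"
  shows "\<exists>!S. pos_def_mat S \<and> S ** S = Q"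
proof -
  have symQ: "\<And>x y. inner x (Q *v y) = inner (Q *v x) y"
    using Q sym_inner unfolding pos_def_mat_def by blast
  obtain B where B: "finite B" "pairwise orthogonal B"
      "\<forall>b\<in>B. norm b = 1 \<and> Q *v b = inner b (Q *v b) *\<^sub>R b" "span B = UNIV"
    using spectral_sub[of "(*v) Q" UNIV] symQ by auto
  have nb: "\<forall>b\<in>B. norm b = 1" using B(3) by blast
  define l where "l b = inner b (Q *v b)" for b
  have lpos: "l b > 0" if "b \<in> B" for b
    using Q nb that unfolding pos_def_mat_def l_def by (metis norm_zero zero_neq_one)
  have Qb: "Q *v b = l b *\<^sub>R b" if "b \<in> B" for b using B(3) that by (simp add: l_def)
  have expand: "x = (\<Sum>b\<in>B. inner x b *\<^sub>R b)" for x
    using orth_expand[OF B(1,2) nb B(4)] .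
  have coef: "inner (\<Sum>b\<in>B. c b *\<^sub>R b) b' = c b'" if "b' \<in> B" for c b'
    using orth_coef[OF B(1,2) nb that] .
  define g where "g x = (\<Sum>b\<in>B. (sqrt (l b) * inner x b) *\<^sub>R b)" for x
  have lin_g: "linear g"
  proof (rule linearI)
    show "g (x + y) = g x + g y" for x y
      unfolding g_def by (simp add: inner_add_left algebra_simps sum.distrib scaleR_add_left)
    show "g (c *\<^sub>R x) = c *\<^sub>R g x" for c x
      unfolding g_def by (simp add: scaleR_sum_right mult.left_commute)
  qed
  define S where "S = matrix g"
  have Sv: "S *v x = g x" for x
    unfolding S_def using lin_g by (simp add: matrix_works linear_matrix_vector_mul_eq)
  have gcoef: "inner (g x) b = sqrt (l b) * inner x b" if "b \<in> B" for x b
    unfolding g_def using coef[OF that] .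
  have linQ: "linear ((*v) Q)" by simp
  have Qexp: "Q *v x = (\<Sum>b\<in>B. (l b * inner x b) *\<^sub>R b)" for x
  proof -
    have "Q *v x = Q *v (\<Sum>b\<in>B. inner x b *\<^sub>R b)" using expand[of x] by simp
    also have "\<dots> = (\<Sum>b\<in>B. inner x b *\<^sub>R (Q *v b))"
      by (simp add: linear_sum[OF linQ] linear_scale[OF linQ])
    also have "\<dots> = (\<Sum>b\<in>B. (l b * inner x b) *\<^sub>R b)"
      by (intro sum.cong refl) (simp add: Qb)
    finally show ?thesis .
  qed
  have gg: "g (g x) = Q *v x" for x
  proof -
    have "g (g x) = (\<Sum>b\<in>B. (sqrt (l b) * (sqrt (l b) * inner x b)) *\<^sub>R b)"
      unfolding g_def[of "g x"] by (intro sum.cong refl) (simp add: gcoef)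
    also have "\<dots> = (\<Sum>b\<in>B. (l b * inner x b) *\<^sub>R b)"
      by (intro sum.cong refl) (simp add: lpos less_imp_le mult.assoc[symmetric])
    finally show ?thesis using Qexp by simp
  qed
  have ginner: "inner x (g y) = (\<Sum>b\<in>B. sqrt (l b) * inner y b * inner x b)" for x y
    unfolding g_def by (simp add: inner_sum_right)
  have symS: "transpose S = S"
    by (rule sym_from_inner) (simp add: Sv ginner inner_commute mult.commute mult.left_commute)
  have pdS: "pos_def_mat S"
    unfolding pos_def_mat_def
  proof (intro conjI allI impI symS)
    fix x :: "real^'n" assume x0: "x \<noteq> 0"
    have "\<exists>b\<in>B. inner x b \<noteq> 0"
    proof (rule ccontr)
      assume "\<not> ?thesis"
      then have "x = 0" using expand[of x] by simp
      with x0 show False by simp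
    qed
    then obtain b0 where b0: "b0 \<in> B" "inner x b0 \<noteq> 0" by blast
    have "0 < sqrt (l b0) * inner x b0 * inner x b0"
    proof -
      have "0 < sqrt (l b0) * (inner x b0)\<^sup>2" using lpos[OF b0(1)] b0(2) by simp
      then show ?thesis by (simp add: power2_eq_square mult.assoc)
    qed
    also have "\<dots> \<le> (\<Sum>b\<in>B. sqrt (l b) * inner x b * inner x b)"
      using B(1) b0(1) lpos
      by (intro member_le_sum) (auto simp: mult.assoc less_imp_le)
    finally show "inner x (S *v x) > 0" using ginner[of x x] Sv by simp
  qed
  have SS: "S ** S = Q" unfolding matrix_eq
    by (simp add: matrix_vector_mul_assoc[symmetric] Sv gg)
  have uniq: "T = S" if T: "pos_def_mat T" "T ** T = Q" for T
  proof -
    have linT: "linear ((*v) T)" by simp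
    have Tb: "T *v b = sqrt (l b) *\<^sub>R b" if bB: "b \<in> B" for b
    proof -
      define c where "c = sqrt (l b)"
      have c0: "c \<ge> 0" unfolding c_def using lpos[OF bB] by simp
      define y where "y = T *v b - c *\<^sub>R b"
      have "T *v y + c *\<^sub>R y = T *v (T *v b) - (c * c) *\<^sub>R b"
        unfolding y_def by (simp add: linear_diff[OF linT] linear_scale[OF linT] algebra_simps)
      also have "T *v (T *v b) = Q *v b" using T(2) by (simp add: matrix_vector_mul_assoc)
      also have "c * c = l b" unfolding c_def using lpos[OF bB] by simp
      finally have "T *v y + c *\<^sub>R y = 0" using Qb[OF bB] by simp
      then have "inner y (T *v y) + c * inner y y = 0"
        by (metis inner_add_right inner_scaleR_right inner_zero_right)
      moreover have "inner y (T *v y) \<ge> 0" using pd_nonneg[OF T(1)] .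
      moreover have "inner y y \<ge> 0" by simp
      ultimately have "inner y (T *v y) = 0" using c0
        by (smt (verit) mult_nonneg_nonneg)
      then have "y = 0" using T(1) unfolding pos_def_mat_def by force
      then show ?thesis unfolding y_def c_def by simp
    qed
    show ?thesis unfolding matrix_eq
    proof
      fix x
      have "T *v x = T *v (\<Sum>b\<in>B. inner x b *\<^sub>R b)" using expand[of x] by simp
      also have "\<dots> = (\<Sum>b\<in>B. inner x b *\<^sub>R (T *v b))"
        by (simp add: linear_sum[OF linT] linear_scale[OF linT])
      also have "\<dots> = g x" unfolding g_def
        by (intro sum.cong refl) (simp add: Tb mult.commute)
      finally show "T *v x = S *v x" using Sv by simp
    qed
  qed
  show ?thesis using pdS SS uniq by blast
qed



lemma density_pos:
  fixes f :: "'b::euclidean_space \<Rightarrow> real"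
  assumes fm: "f \<in> borel_measurable lborel" and fp: "\<And>x. f x > 0" and A: "A \<in> sets borel"
    and U: "open U" "pt \<in> U" "U \<subseteq> A"
  shows "emeasure (density lborel (\<lambda>x. ennreal (f x))) A > 0"
proof (rule ccontr)
  assume "\<not> ?thesis"
  then have "emeasure (density lborel (\<lambda>x. ennreal (f x))) A = 0" by (simp add: not_gr_zero)
  then have "(\<integral>\<^sup>+ x. ennreal (f x) * indicator A x \<partial>lborel) = 0"
    using A fm by (simp add: emeasure_density)
  then have "AE x in lborel. ennreal (f x) * indicator A x = 0"
    using A fm by (subst (asm) nn_integral_0_iff_AE) auto
  then have "AE x in lborel. x \<in> - U"
  proof eventually_elim
    case (elim x)
    then have "x \<notin> A" using fp[of x] by (auto simp: indicator_def split: if_splits)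
    then show ?case using U by auto
  qed
  then have "AE x in lebesgue. x \<in> - U" by (rule AE_completion)
  then have "pt \<in> - U" using U(1) by (intro mem_closed_if_AE_lebesgue) auto
  then show False using U by simp
qed

lemma dc_at_infinity:
  fixes s :: "real \<Rightarrow> 'a \<Rightarrow> real" and f :: "'a \<Rightarrow> real"
  assumes "f \<in> borel_measurable M" "\<And>t. s t \<in> borel_measurable M" "integrable M w"
    and lim: "AE x in M. ((\<lambda>i. s i x) \<longlongrightarrow> f x) at_infinity"
    and bound: "\<And>i x. x \<in> space M \<Longrightarrow> norm (s i x) \<le> w x"
  shows "((\<lambda>t. integral\<^sup>L M (s t)) \<longlongrightarrow> integral\<^sup>L M f) at_infinity"
proof -
  have top: "((\<lambda>t. integral\<^sup>L M (s t)) \<longlongrightarrow> integral\<^sup>L M f) at_top"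
  proof (rule integral_dominated_convergence_at_top[where w = w])
    show "AE x in M. ((\<lambda>i. s i x) \<longlongrightarrow> f x) at_top"
      using lim by eventually_elim (rule filterlim_mono[OF _ order_refl at_top_le_at_infinity])
    show "\<forall>\<^sub>F i in at_top. AE x in M. norm (s i x) \<le> w x"
      using bound by (intro always_eventually allI AE_I2) auto
  qed (use assms in auto)
  have bot: "((\<lambda>t. integral\<^sup>L M (s (- t))) \<longlongrightarrow> integral\<^sup>L M f) at_top"
  proof (rule integral_dominated_convergence_at_top[where w = w])
    show "AE x in M. ((\<lambda>i. s (- i) x) \<longlongrightarrow> f x) at_top"
      using lim
    proof eventually_elim
      case (elim x)
      have "((\<lambda>i. s i x) \<longlongrightarrow> f x) at_bot"
        using elim by (rule filterlim_mono) (auto simp: at_infinity_eq_at_top_bot)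
      then show ?case by (simp add: filterlim_at_bot_mirror)
    qed
    show "\<forall>\<^sub>F i in at_top. AE x in M. norm (s (- i) x) \<le> w x"
      using bound by (intro always_eventually allI AE_I2) auto
  qed (use assms in auto)
  then have "((\<lambda>t. integral\<^sup>L M (s t)) \<longlongrightarrow> integral\<^sup>L M f) at_bot"
    by (simp add: filterlim_at_bot_mirror)
  with top show ?thesis unfolding at_infinity_eq_at_top_bot by (rule filterlim_sup)
qed

definition hfun :: "real \<Rightarrow> real \<Rightarrow> real \<Rightarrow> real \<Rightarrow> real \<Rightarrow> real" where
  "hfun \<alpha> \<sigma> q \<gamma> z = - \<gamma> + wgt \<alpha> \<sigma> q \<gamma> z * (z / sqrt q + \<gamma>)"

lemma h_bound:
  assumes a: "\<alpha> > 0" and sg: "\<sigma> > 0" and q: "q > 0" and s0: "z + sqrt q * \<gamma> \<noteq> 0"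
  shows "\<bar>hfun \<alpha> \<sigma> q \<gamma> z - z / sqrt q\<bar> \<le> exp (2 * \<alpha>) * \<sigma>\<^sup>2 / (\<alpha> * sqrt q * \<bar>z + sqrt q * \<gamma>\<bar>)"
proof -
  define s where "s = z + sqrt q * \<gamma>"
  define E where "E = exp (2 * \<alpha>) * exp (- \<alpha> * s\<^sup>2 / \<sigma>\<^sup>2)"
  have sq: "sqrt q > 0" using q by simp
  have E0: "E > 0" unfolding E_def by simp
  have w: "wgt \<alpha> \<sigma> q \<gamma> z = inverse (1 + E)" unfolding wgt_def E_def s_def ..
  have eq: "hfun \<alpha> \<sigma> q \<gamma> z - z / sqrt q = (inverse (1 + E) - 1) * (s / sqrt q)"
  proof -
    have zs: "z / sqrt q + \<gamma> = s / sqrt q" unfolding s_def using sq by (simp add: field_simps)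
    show ?thesis unfolding hfun_def w zs
      by (simp add: algebra_simps zs[symmetric])
  qed
  have w1: "\<bar>inverse (1 + E) - 1\<bar> \<le> E"
  proof -
    have "inverse (1 + E) - 1 = - E / (1 + E)" using E0 by (simp add: field_simps)
    then have "\<bar>inverse (1 + E) - 1\<bar> = E / (1 + E)" using E0 by simp
    also have "\<dots> \<le> E" using E0 by (simp add: divide_le_eq)
    finally show ?thesis .
  qed
  define y where "y = \<alpha> * s\<^sup>2 / \<sigma>\<^sup>2"
  have y0: "y > 0" unfolding y_def using a sg s0 s_def by simp
  have "exp (- \<alpha> * s\<^sup>2 / \<sigma>\<^sup>2) = inverse (exp y)" unfolding y_def by (simp add: exp_minus)
  also have "\<dots> \<le> inverse y"
    using y0 exp_ge_add_one_self[of y] by (intro le_imp_inverse_le) linarith+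
  finally have "E \<le> exp (2 * \<alpha>) * inverse y" unfolding E_def by simp
  then have Eb: "E \<le> exp (2 * \<alpha>) * \<sigma>\<^sup>2 / (\<alpha> * s\<^sup>2)" unfolding y_def by (simp add: field_simps)
  have "\<bar>hfun \<alpha> \<sigma> q \<gamma> z - z / sqrt q\<bar> = \<bar>inverse (1 + E) - 1\<bar> * (\<bar>s\<bar> / sqrt q)"
    unfolding eq using sq by (simp add: abs_mult)
  also have "\<dots> \<le> (exp (2 * \<alpha>) * \<sigma>\<^sup>2 / (\<alpha> * s\<^sup>2)) * (\<bar>s\<bar> / sqrt q)"
    using w1 Eb sq by (intro mult_right_mono) auto
  also have "\<dots> = exp (2 * \<alpha>) * \<sigma>\<^sup>2 / (\<alpha> * sqrt q * \<bar>s\<bar>)"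
  proof -
    have sne: "s \<noteq> 0" using s0 s_def by simp
    have "s\<^sup>2 = \<bar>s\<bar> * \<bar>s\<bar>" by (simp add: power2_eq_square abs_mult_self_eq)
    then show ?thesis using sne sq a by (simp add: field_simps)
  qed
  finally show ?thesis unfolding s_def .
qed

lemma h_lim:
  assumes a: "\<alpha> > 0" and sg: "\<sigma> > 0" and q: "q > 0"
  shows "((\<lambda>\<gamma>. hfun \<alpha> \<sigma> q \<gamma> z) \<longlongrightarrow> z / sqrt q) at_infinity"
proof (rule tendstoI)
  fix e :: real assume e: "e > 0"
  have sq: "sqrt q > 0" using q by simp
  define K where "K = exp (2 * \<alpha>) * \<sigma>\<^sup>2 / (\<alpha> * sqrt q)"
  have K0: "K > 0" unfolding K_def using a sg sq by simp
  define b where "b = (K / e + 1 + \<bar>z\<bar>) / sqrt q"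
  show "\<forall>\<^sub>F \<gamma> in at_infinity. dist (hfun \<alpha> \<sigma> q \<gamma> z) (z / sqrt q) < e"
    unfolding eventually_at_infinity
  proof (intro exI[of _ b] allI impI)
    fix \<gamma> :: real assume "b \<le> norm \<gamma>"
    then have "sqrt q * b \<le> sqrt q * \<bar>\<gamma>\<bar>" using sq by simp
    then have g: "K / e + 1 + \<bar>z\<bar> \<le> sqrt q * \<bar>\<gamma>\<bar>" unfolding b_def using sq by simp
    have "\<bar>sqrt q * \<gamma>\<bar> \<le> \<bar>z + sqrt q * \<gamma>\<bar> + \<bar>z\<bar>" by linarith
    then have sb: "K / e + 1 \<le> \<bar>z + sqrt q * \<gamma>\<bar>" using g sq by (simp add: abs_mult)
    have Ke: "K / e > 0" using K0 e by simp
    then have s0: "z + sqrt q * \<gamma> \<noteq> 0" using sb by auto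
    have "\<bar>hfun \<alpha> \<sigma> q \<gamma> z - z / sqrt q\<bar> \<le> K / \<bar>z + sqrt q * \<gamma>\<bar>"
      using h_bound[OF a sg q s0] unfolding K_def by (simp add: field_simps)
    also have "\<dots> \<le> K / (K / e + 1)"
      using sb K0 Ke by (intro divide_left_mono) auto
    also have "\<dots> < e" using K0 e by (simp add: field_simps)
    finally show "dist (hfun \<alpha> \<sigma> q \<gamma> z) (z / sqrt q) < e" by (simp add: dist_real_def)
  qed
qed

lemma gap:
  fixes t2 :: real
  assumes a: "\<alpha> > 0" and sg: "\<sigma> > 0" and q: "q > 0"
  defines "\<gamma>0 \<equiv> \<bar>t2\<bar> + 1"
  shows "(\<forall>z. z / sqrt q \<le> t2 \<longrightarrow> hfun \<alpha> \<sigma> q \<gamma>0 z \<le> t2) \<and>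
         (\<exists>\<delta>>0. \<forall>z. sqrt q * t2 < z \<and> z < sqrt q * t2 + \<delta> \<longrightarrow> hfun \<alpha> \<sigma> q \<gamma>0 z \<le> t2)"
proof -
  have sq: "sqrt q > 0" using q by simp
  define c where "c = t2 + \<gamma>0"
  have c1: "c \<ge> 1" unfolding c_def \<gamma>0_def by linarith
  define E where "E z = exp (2 * \<alpha>) * exp (- \<alpha> * (z + sqrt q * \<gamma>0)\<^sup>2 / \<sigma>\<^sup>2)" for z
  have E0: "E z > 0" for z unfolding E_def by simp
  have hf: "hfun \<alpha> \<sigma> q \<gamma>0 z = - \<gamma>0 + inverse (1 + E z) * (z / sqrt q + \<gamma>0)" for z
    unfolding hfun_def wgt_def E_def ..
  have w01: "0 < inverse (1 + E z)" "inverse (1 + E z) < 1" for z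
    using E0[of z] by (auto simp: inverse_less_1_iff)
  have part1: "hfun \<alpha> \<sigma> q \<gamma>0 z \<le> t2" if "z / sqrt q \<le> t2" for z
  proof -
    define u where "u = z / sqrt q + \<gamma>0"
    have uc: "u \<le> c" unfolding u_def c_def using that by simp
    have "inverse (1 + E z) * u \<le> c"
    proof (cases "u \<ge> 0")
      case True
      then have "inverse (1 + E z) * u \<le> 1 * u" using w01[of z] by (intro mult_right_mono) auto
      then show ?thesis using uc by simp
    next
      case False
      then have "inverse (1 + E z) * u \<le> 0" using w01(1)[of z] by (intro mult_nonneg_nonpos) auto
      then show ?thesis using c1 by simp
    qed
    then show ?thesis unfolding hf u_def[symmetric] c_def by simp
  qed
  define K where "K = exp (2 * \<alpha>) * exp (- \<alpha> * q * (c + 1)\<^sup>2 / \<sigma>\<^sup>2)"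
  have K0: "K > 0" unfolding K_def by simp
  define eps where "eps = min 1 (c * K)"
  have eps0: "eps > 0" unfolding eps_def using c1 K0 by simp
  have part2: "hfun \<alpha> \<sigma> q \<gamma>0 z \<le> t2" if z: "sqrt q * t2 < z" "z < sqrt q * t2 + sqrt q * eps" for z
  proof -
    define u where "u = z / sqrt q + \<gamma>0"
    have "t2 < z / sqrt q" "z / sqrt q < t2 + eps" using z sq by (auto simp: field_simps)
    then have u1: "c < u" "u < c + eps" unfolding u_def c_def by auto
    have u0: "u > 0" using u1 c1 by linarith
    have ue: "u \<le> c + 1" using u1 eps_def by linarith
    have zu: "z + sqrt q * \<gamma>0 = sqrt q * u" unfolding u_def using sq by (simp add: field_simps)
    have "(z + sqrt q * \<gamma>0)\<^sup>2 = q * u\<^sup>2" unfolding zu using q by (simp add: power_mult_distrib)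
    also have "\<dots> \<le> q * (c + 1)\<^sup>2" using u0 ue q by (intro mult_left_mono power_mono) auto
    finally have "- \<alpha> * q * (c + 1)\<^sup>2 / \<sigma>\<^sup>2 \<le> - \<alpha> * (z + sqrt q * \<gamma>0)\<^sup>2 / \<sigma>\<^sup>2"
      using a sg by (simp add: divide_right_mono mult_left_mono)
    then have KE: "K \<le> E z" unfolding K_def E_def by simp
    have "inverse (1 + E z) \<le> inverse (1 + K)" using KE K0 by (intro le_imp_inverse_le) auto
    then have "inverse (1 + E z) * u \<le> inverse (1 + K) * u" using u0 by (intro mult_right_mono) auto
    also have "\<dots> \<le> inverse (1 + K) * (c + c * K)"
      using u1 eps_def K0 by (intro mult_left_mono) auto
    also have "\<dots> = c" using K0 by (simp add: field_simps)
    finally show ?thesis unfolding hf u_def[symmetric] c_def by simp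
  qed
  show ?thesis
  proof (intro conjI allI impI exI[of _ "sqrt q * eps"])
    show "sqrt q * eps > 0" using sq eps0 by simp
  qed (use part1 part2 in auto)
qed


lemma inv_sqrt_surj:
  fixes Q :: "real^'n^'n"
  assumes Q: "pos_def_mat Q"
  shows "\<exists>x. mat_inv_sqrt Q *v x = y"
proof -
  define S where "S = mat_sqrt Q"
  have pS: "pos_def_mat S \<and> S ** S = Q"
    unfolding S_def mat_sqrt_def by (rule theI'[OF pd_sqrt_ex1[OF Q]])
  have "inj ((*v) S)"
  proof (rule injI)
    fix x y assume "S *v x = S *v y"
    then have "S *v (x - y) = 0" by (simp add: linear_diff[OF matrix_vector_mul_linear])
    then have "inner (x - y) (S *v (x - y)) = 0" by simp
    then show "x = y" using pS unfolding pos_def_mat_def by (metis less_irrefl right_minus_eq)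
  qed
  then have "invertible S" using invertible_left_inverse matrix_left_invertible_injective by blast
  then have "S ** matrix_inv S = mat 1 \<and> matrix_inv S ** S = mat 1"
    unfolding invertible_def matrix_inv_def by (rule someI_ex)
  then have "mat_inv_sqrt Q *v (S *v y) = y"
    unfolding mat_inv_sqrt_def S_def[symmetric] by (simp add: matrix_vector_mul_assoc)
  then show ?thesis by blast
qed


theorem mainTheorem9:
  fixes M :: "'a measure"
    and Z1 :: "'a \<Rightarrow> real^'n" and Z2 :: "'a \<Rightarrow> real"
    and Q11 :: "real^'n^'n" and Q22 \<sigma> \<alpha> :: real
    and t1 :: "real^'n" and t2 :: real
  assumes "prob_space M"
    and "\<sigma> > 0" and "\<alpha> > 0"
    and "pos_def_mat Q11" and "Q22 > 0"
    and "distributed M lborel Z1 (\<lambda>x. ennreal (\<Prod>i\<in>UNIV. normal_density 0 \<sigma> (x $ i)))"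
    and "distributed M lborel Z2 (\<lambda>x. ennreal (normal_density 0 \<sigma> x))"
    and "\<forall>A \<in> sets borel. \<forall>B \<in> sets borel.
           measure M (Z1 -` A \<inter> Z2 -` B \<inter> space M)
             = measure M (Z1 -` A \<inter> space M) * measure M (Z2 -` B \<inter> space M)"
  shows "((\<lambda>\<gamma>. F_inf M Z1 Z2 Q11 Q22 \<sigma> \<alpha> \<gamma> t1 t2) \<longlongrightarrow>
            measure M {\<omega> \<in> space M. \<forall>i. (mat_inv_sqrt Q11 *v Z1 \<omega>) $ i \<le> t1 $ i}
          * measure M {\<omega> \<in> space M. Z2 \<omega> / sqrt Q22 \<le> t2}) at_infinity
    \<and> (\<exists>\<gamma>. F_inf M Z1 Z2 Q11 Q22 \<sigma> \<alpha> \<gamma> t1 t2 \<noteq>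
            measure M {\<omega> \<in> space M. \<forall>i. (mat_inv_sqrt Q11 *v Z1 \<omega>) $ i \<le> t1 $ i}
          * measure M {\<omega> \<in> space M. Z2 \<omega> / sqrt Q22 \<le> t2})"
proof -
  interpret P: prob_space M by (rule assms(1))
  have sg: "\<sigma> > 0" and al: "\<alpha> > 0" and q: "Q22 > 0" using assms by auto
  have sq: "sqrt Q22 > 0" using q by simp
  define B1 where "B1 = mat_inv_sqrt Q11"
  define C1 where "C1 = {x::real^'n. \<forall>i. (B1 *v x)$i \<le> t1$i}"
  define C2 where "C2 \<gamma> = {z::real. hfun \<alpha> \<sigma> Q22 \<gamma> z \<le> t2}" for \<gamma>
  define Ci where "Ci = {z::real. z / sqrt Q22 \<le> t2}"
  define \<phi>1 where "\<phi>1 = (\<lambda>x::real^'n. \<Prod>i\<in>UNIV. normal_density 0 \<sigma> (x $ i))"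
  define N1 where "N1 = distr M lborel Z1"
  define N2 where "N2 = distr M lborel Z2"
  have Z1m: "Z1 \<in> measurable M lborel" and N1d: "N1 = density lborel (\<lambda>x. ennreal (\<phi>1 x))"
    using assms(6) unfolding distributed_def N1_def \<phi>1_def by auto
  have Z2m: "Z2 \<in> measurable M lborel" and N2d: "N2 = density lborel (\<lambda>x. ennreal (normal_density 0 \<sigma> x))"
    using assms(7) unfolding distributed_def N2_def by auto
  have pN1: "prob_space N1" unfolding N1_def using Z1m by (rule P.prob_space_distr)
  have pN2: "prob_space N2" unfolding N2_def using Z2m by (rule P.prob_space_distr)
  interpret Q1: prob_space N1 by (rule pN1)
  interpret Q2: prob_space N2 by (rule pN2)
  have C1b: "C1 \<in> sets borel"
  proof -
    have "C1 = (\<Inter>i. {x. (B1 *v x)$i \<le> t1$i})" unfolding C1_def by auto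
    moreover have "closed {x. (B1 *v x)$i \<le> t1$i}" for i
      by (intro closed_Collect_le continuous_intros)
    ultimately show ?thesis by (auto intro!: borel_closed closed_INT)
  qed
  have C2b: "C2 \<gamma> \<in> sets borel" for \<gamma>
    unfolding C2_def hfun_def wgt_def by measurable
  have Cib: "Ci \<in> sets borel" unfolding Ci_def by measurable
  have m1: "measure M (Z1 -` A \<inter> space M) = measure N1 A" if "A \<in> sets borel" for A
    unfolding N1_def using Z1m that by (simp add: measure_distr)
  have m2: "measure M (Z2 -` A \<inter> space M) = measure N2 A" if "A \<in> sets borel" for A
    unfolding N2_def using Z2m that by (simp add: measure_distr)
  define P1 where "P1 = measure N1 C1"
  define G where "G \<gamma> = measure N2 (C2 \<gamma>)" for \<gamma>
  define Gi where "Gi = measure N2 Ci"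
  have e1: "{\<omega> \<in> space M. \<forall>i. (mat_inv_sqrt Q11 *v Z1 \<omega>) $ i \<le> t1 $ i} = Z1 -` C1 \<inter> space M"
    unfolding C1_def B1_def by auto
  have e2: "{\<omega> \<in> space M. Z2 \<omega> / sqrt Q22 \<le> t2} = Z2 -` Ci \<inter> space M"
    unfolding Ci_def by auto
  have eF: "F_inf M Z1 Z2 Q11 Q22 \<sigma> \<alpha> \<gamma> t1 t2 = P1 * G \<gamma>" for \<gamma>
  proof -
    have "F_inf M Z1 Z2 Q11 Q22 \<sigma> \<alpha> \<gamma> t1 t2 = measure M (Z1 -` C1 \<inter> Z2 -` C2 \<gamma> \<inter> space M)"
      unfolding F_inf_def C1_def C2_def B1_def hfun_def by (intro arg_cong[where f = "measure M"]) auto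
    also have "\<dots> = P1 * G \<gamma>" using assms(8) C1b C2b m1 m2 unfolding P1_def G_def by simp
    finally show ?thesis .
  qed
  have rhs: "measure M {\<omega> \<in> space M. \<forall>i. (mat_inv_sqrt Q11 *v Z1 \<omega>) $ i \<le> t1 $ i}
          * measure M {\<omega> \<in> space M. Z2 \<omega> / sqrt Q22 \<le> t2} = P1 * Gi"
    unfolding e1 e2 P1_def Gi_def using m1 m2 C1b Cib by simp
  have Glim: "(G \<longlongrightarrow> Gi) at_infinity"
  proof -
    have sN2: "sets N2 = sets borel" unfolding N2_def by simp
    have spN2: "space N2 = UNIV" unfolding N2_def by simp
    have "((\<lambda>t. integral\<^sup>L N2 (indicator (C2 t) :: real \<Rightarrow> real)) \<longlongrightarrow> integral\<^sup>L N2 (indicator Ci :: real \<Rightarrow> real)) at_infinity"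
    proof (rule dc_at_infinity[where w = "\<lambda>_. 1" and s = "\<lambda>t. indicator (C2 t)" and f = "indicator Ci"])
      show "indicator Ci \<in> borel_measurable N2" using Cib sN2 by (intro borel_measurable_indicator) simp
      show "indicator (C2 t) \<in> borel_measurable N2" for t using C2b sN2 by (intro borel_measurable_indicator) simp
      show "integrable N2 (\<lambda>_. 1::real)" by (rule Q2.integrable_const)
      show "norm (indicator (C2 i) x :: real) \<le> 1" for i x by (simp add: indicator_def)
      have "AE z in lborel. z \<noteq> sqrt Q22 * t2" by (rule AE_lborel_singleton)
      then have "AE z in N2. z \<noteq> sqrt Q22 * t2" unfolding N2d
        by (subst AE_density) (auto elim!: eventually_mono)
      then show "AE z in N2. ((\<lambda>i. indicator (C2 i) z :: real) \<longlongrightarrow> indicator Ci z) at_infinity"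
      proof eventually_elim
        case (elim z)
        have hl: "((\<lambda>\<gamma>. hfun \<alpha> \<sigma> Q22 \<gamma> z) \<longlongrightarrow> z / sqrt Q22) at_infinity"
          by (rule h_lim[OF al sg q])
        have "z / sqrt Q22 \<noteq> t2" using elim sq by (auto simp: field_simps)
        then consider "z / sqrt Q22 < t2" | "z / sqrt Q22 > t2" by linarith
        then show ?case
        proof cases
          case 1
          have "\<forall>\<^sub>F \<gamma> in at_infinity. hfun \<alpha> \<sigma> Q22 \<gamma> z < t2" by (rule order_tendstoD(2)[OF hl 1])
          then have "\<forall>\<^sub>F \<gamma> in at_infinity. indicator (C2 \<gamma>) z = (indicator Ci z :: real)"
            by eventually_elim (use 1 in \<open>auto simp: C2_def Ci_def indicator_def\<close>)
          then show ?thesis by (rule tendsto_eventually)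
        next
          case 2
          have "\<forall>\<^sub>F \<gamma> in at_infinity. hfun \<alpha> \<sigma> Q22 \<gamma> z > t2" by (rule order_tendstoD(1)[OF hl 2])
          then have "\<forall>\<^sub>F \<gamma> in at_infinity. indicator (C2 \<gamma>) z = (indicator Ci z :: real)"
            by eventually_elim (use 2 in \<open>auto simp: C2_def Ci_def indicator_def\<close>)
          then show ?thesis by (rule tendsto_eventually)
        qed
      qed
    qed
    then show ?thesis unfolding G_def Gi_def using spN2 by simp
  qed
  have P1pos: "P1 > 0"
  proof -
    define U where "U = {x::real^'n. \<forall>i. (B1 *v x)$i < t1$i}"
    have oU: "open U"
    proof -
      have "U = (\<Inter>i. {x. (B1 *v x)$i < t1$i})" unfolding U_def by auto
      moreover have "open {x. (B1 *v x)$i < t1$i}" for i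
        by (intro open_Collect_less continuous_intros)
      ultimately show ?thesis by (auto intro: open_INT)
    qed
    obtain x0 where x0: "B1 *v x0 = t1 - 1"
      using inv_sqrt_surj[OF assms(4)] unfolding B1_def by blast
    have "x0 \<in> U" using x0 by (simp add: U_def)
    moreover have "U \<subseteq> C1" unfolding U_def C1_def by (auto intro: less_imp_le)
    moreover have "\<phi>1 \<in> borel_measurable lborel" unfolding \<phi>1_def by measurable
    moreover have "\<phi>1 x > 0" for x unfolding \<phi>1_def using sg by (intro prod_pos) (simp add: normal_density_pos)
    ultimately have "emeasure N1 C1 > 0" unfolding N1d
      using C1b oU by (intro density_pos) auto
    then show ?thesis unfolding P1_def using Q1.emeasure_eq_measure by simp
  qed
  define \<gamma>0 where "\<gamma>0 = \<bar>t2\<bar> + 1"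
  obtain \<delta> where d0: "\<delta> > 0"
    and g1: "\<And>z. z / sqrt Q22 \<le> t2 \<Longrightarrow> hfun \<alpha> \<sigma> Q22 \<gamma>0 z \<le> t2"
    and g2: "\<And>z. sqrt Q22 * t2 < z \<Longrightarrow> z < sqrt Q22 * t2 + \<delta> \<Longrightarrow> hfun \<alpha> \<sigma> Q22 \<gamma>0 z \<le> t2"
    using gap[OF al sg q, of t2] unfolding \<gamma>0_def by blast
  define I where "I = {sqrt Q22 * t2 <..< sqrt Q22 * t2 + \<delta>}"
  have Ib: "I \<in> sets borel" unfolding I_def by simp
  have Ipos: "measure N2 I > 0"
  proof -
    have "emeasure N2 I > 0" unfolding N2d
    proof (rule density_pos[where U = I and pt = "sqrt Q22 * t2 + \<delta> / 2"])
      show "normal_density 0 \<sigma> x > 0" for x using sg by (simp add: normal_density_pos)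
    qed (use d0 Ib in \<open>auto simp: I_def\<close>)
    then show ?thesis using Q2.emeasure_eq_measure by simp
  qed
  have sub: "Ci \<union> I \<subseteq> C2 \<gamma>0" unfolding Ci_def I_def C2_def using g1 g2 by auto
  have disj: "Ci \<inter> I = {}" unfolding Ci_def I_def using sq by (auto simp: field_simps)
  have sN2: "sets N2 = sets borel" unfolding N2_def by simp
  have "Gi < Gi + measure N2 I" using Ipos by simp
  also have "\<dots> = measure N2 (Ci \<union> I)"
    using disj Cib Ib sN2 unfolding Gi_def by (simp add: Q2.finite_measure_Union)
  also have "\<dots> \<le> G \<gamma>0" unfolding G_def
    using sub C2b sN2 by (intro Q2.finite_measure_mono) auto
  finally have gap': "Gi < G \<gamma>0" .
  show ?thesis unfolding rhs eF
  proof
    show "((\<lambda>\<gamma>. P1 * G \<gamma>) \<longlongrightarrow> P1 * Gi) at_infinity" by (intro tendsto_mult_left Glim)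
    show "\<exists>\<gamma>. P1 * G \<gamma> \<noteq> P1 * Gi" using gap' P1pos by (intro exI[of _ \<gamma>0]) simp
  qed
qed
end
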